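(* Let $\mu,\nu\in P_1(\mathbb{R}^d)$. The following are equivalent: (i) $\int\varphi\,d\mu\le\int\varphi\,d\nu$ for every lower semicontinuous proper convex $\varphi:\mathbb{R}^d\to\mathbb{R}\cup\{+\infty\}$ such that both integrals exist in the extended sense; (ii) $\int\varphi\,d\mu\le\int\varphi\,d\nu$ for every lower semicontinuous proper convex $\varphi$ which is bounded from below; (iii) $\int\varphi\,d\mu\le\int\varphi\,d\nu$ for every Lipschitz continuous convex $\varphi:\mathbb{R}^d\to\mathbb{R}$.
   Context: $P_1(\mathbb{R}^d)$ is the set of Borel probability measures on $\mathbb{R}^d$ with finite first moment. *)

theory Defs
  imports "HOL-Analysis.Analysis" "HOL-Probability.Probability"
begin

definition P1 :: "'a::euclidean_space measure \<Rightarrow> bool" where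
  "P1 M \<longleftrightarrow> sets M = sets borel \<and> prob_space M \<and> integrable M (\<lambda>x. norm x)"

definition lsc :: "('a::topological_space \<Rightarrow> ereal) \<Rightarrow> bool" where
  "lsc f \<longleftrightarrow> (\<forall>x. f x \<le> Liminf (at x) f)"

definition ereal_convex :: "('a::real_vector \<Rightarrow> ereal) \<Rightarrow> bool" where
  "ereal_convex f \<longleftrightarrow> (\<forall>x y. \<forall>t::real. 0 < t \<and> t < 1 \<longrightarrow>
      f (t *\<^sub>R x + (1 - t) *\<^sub>R y) \<le> ereal t * f x + ereal (1 - t) * f y)"

definition proper_fun :: "('a \<Rightarrow> ereal) \<Rightarrow> bool" where
  "proper_fun f \<longleftrightarrow> (\<forall>x. f x \<noteq> -\<infinity>) \<and> (\<exists>x. f x \<noteq> \<infinity>)"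

definition ext_integral :: "'a measure \<Rightarrow> ('a \<Rightarrow> ereal) \<Rightarrow> ereal" where
  "ext_integral M f =
     enn2ereal (\<integral>\<^sup>+x. e2ennreal (f x) \<partial>M) - enn2ereal (\<integral>\<^sup>+x. e2ennreal (- f x) \<partial>M)"

definition ext_integral_exists :: "'a measure \<Rightarrow> ('a \<Rightarrow> ereal) \<Rightarrow> bool" where
  "ext_integral_exists M f \<longleftrightarrow>
     (\<integral>\<^sup>+x. e2ennreal (f x) \<partial>M) < \<infinity> \<or> (\<integral>\<^sup>+x. e2ennreal (- f x) \<partial>M) < \<infinity>"

end

theory Submission
  imports Defs
begin


lemma lsc_nbhd:
  fixes \<phi> :: "'a::metric_space \<Rightarrow> ereal"
  assumes "lsc \<phi>" "M < \<phi> x"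
  shows "\<exists>r>0. \<forall>y. dist y x < r \<longrightarrow> M < \<phi> y"
proof -
  have "M < Liminf (at x) \<phi>" using assms unfolding lsc_def by (meson less_le_trans)
  then have "eventually (\<lambda>y. \<phi> y > M) (at x)" by (rule less_LiminfD)
  then obtain r where r: "r > 0" "\<And>y. y \<noteq> x \<Longrightarrow> dist y x < r \<Longrightarrow> M < \<phi> y"
    unfolding eventually_at by blast
  show ?thesis using r assms(2) by (metis)
qed

lemma lsc_borel:
  fixes \<phi> :: "'a::metric_space \<Rightarrow> ereal"
  assumes "lsc \<phi>"
  shows "\<phi> \<in> borel_measurable borel"
proof (rule borel_measurableI_greater)
  fix y
  have "open {x. y < \<phi> x}"
    unfolding open_dist using lsc_nbhd[OF assms] by (metis dist_commute mem_Collect_eq)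
  then show "{x \<in> space borel. y < \<phi> x} \<in> sets borel" by simp
qed



definition env :: "('a::metric_space \<Rightarrow> ereal) \<Rightarrow> real \<Rightarrow> 'a \<Rightarrow> real" where
 "env \<phi> n x = Inf ((\<lambda>y. real_of_ereal (\<phi> y) + n * dist x y) ` {y. \<phi> y \<noteq> \<infinity>})"

context
  fixes \<phi> :: "'a::real_normed_vector \<Rightarrow> ereal" and c :: real
  assumes pr: "proper_fun \<phi>" and lb: "\<And>x. ereal c \<le> \<phi> x"
begin

lemma D_ne: "{y. \<phi> y \<noteq> \<infinity>} \<noteq> {}" using pr unfolding proper_fun_def by auto

lemma D_real: "\<phi> y \<noteq> \<infinity> \<Longrightarrow> \<phi> y = ereal (real_of_ereal (\<phi> y))"
  using lb[of y] by (cases "\<phi> y") auto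

lemma D_ge: "\<phi> y \<noteq> \<infinity> \<Longrightarrow> c \<le> real_of_ereal (\<phi> y)"
  using lb[of y] D_real[of y] by (metis ereal_less_eq(3))

lemma env_bdd: "0 \<le> n \<Longrightarrow> bdd_below ((\<lambda>y. real_of_ereal (\<phi> y) + n * dist x y) ` {y. \<phi> y \<noteq> \<infinity>})"
  unfolding bdd_below_def
  by (rule exI[of _ c]) (auto intro: add_increasing2 D_ge)

lemma env_lower: "0 \<le> n \<Longrightarrow> \<phi> y \<noteq> \<infinity> \<Longrightarrow> env \<phi> n x \<le> real_of_ereal (\<phi> y) + n * dist x y"
  unfolding env_def by (rule cInf_lower[OF _ env_bdd]) auto

lemma env_greatest: "(\<And>y. \<phi> y \<noteq> \<infinity> \<Longrightarrow> M \<le> real_of_ereal (\<phi> y) + n * dist x y) \<Longrightarrow> M \<le> env \<phi> n x"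
  unfolding env_def using D_ne by (intro cInf_greatest) auto

lemma env_ge: "0 \<le> n \<Longrightarrow> c \<le> env \<phi> n x"
  by (rule env_greatest) (auto intro: add_increasing2 D_ge)

lemma env_le: "0 \<le> n \<Longrightarrow> ereal (env \<phi> n x) \<le> \<phi> x"
proof (cases "\<phi> x = \<infinity>")
  case False
  assume n: "0 \<le> n"
  have "env \<phi> n x \<le> real_of_ereal (\<phi> x) + n * dist x x" by (rule env_lower[OF n False])
  then have "env \<phi> n x \<le> real_of_ereal (\<phi> x)" by simp
  then show ?thesis by (subst D_real[OF False]) simp
qed simp

lemma env_mono: "0 \<le> n \<Longrightarrow> n \<le> m \<Longrightarrow> env \<phi> n x \<le> env \<phi> m x"
proof (rule env_greatest)
  fix y assume n: "0 \<le> n" "n \<le> m" and y: "\<phi> y \<noteq> \<infinity>"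
  have "env \<phi> n x \<le> real_of_ereal (\<phi> y) + n * dist x y" by (rule env_lower[OF n(1) y])
  also have "\<dots> \<le> real_of_ereal (\<phi> y) + m * dist x y" using \<open>n \<le> m\<close> by (simp add: mult_right_mono)
  finally show "env \<phi> n x \<le> real_of_ereal (\<phi> y) + m * dist x y" .
qed

lemma env_lip1: "0 \<le> n \<Longrightarrow> env \<phi> n x \<le> env \<phi> n x' + n * dist x x'"
proof -
  assume n: "0 \<le> n"
  have "env \<phi> n x - n * dist x x' \<le> env \<phi> n x'"
  proof (rule env_greatest)
    fix y assume y: "\<phi> y \<noteq> \<infinity>"
    have "env \<phi> n x \<le> real_of_ereal (\<phi> y) + n * dist x y" by (rule env_lower[OF n y])
    also have "n * dist x y \<le> n * dist x' y + n * dist x x'"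
    proof -
      have "dist x y \<le> dist x' y + dist x x'" using dist_triangle[of x y x'] by linarith
      then have "n * dist x y \<le> n * (dist x' y + dist x x')" using n by (rule mult_left_mono)
      then show ?thesis by (simp add: distrib_left)
    qed
    finally show "env \<phi> n x - n * dist x x' \<le> real_of_ereal (\<phi> y) + n * dist x' y" by simp
  qed
  then show ?thesis by simp
qed

lemma env_lip: "0 \<le> n \<Longrightarrow> n-lipschitz_on UNIV (env \<phi> n)"
proof (rule lipschitz_onI)
  fix x y assume n: "0 \<le> n"
  show "dist (env \<phi> n x) (env \<phi> n y) \<le> n * dist x y"
    using env_lip1[OF n, of x y] env_lip1[OF n, of y x] by (simp add: dist_real_def dist_commute abs_le_iff)
qed

lemma env_approx:
  assumes "lsc \<phi>" "ereal M < \<phi> x"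
  shows "\<exists>n::nat. M \<le> env \<phi> n x"
proof -
  obtain r where r: "r > 0" "\<And>y. dist y x < r \<Longrightarrow> ereal M < \<phi> y" using lsc_nbhd[OF assms] by blast
  obtain n :: nat where n: "(M - c) / r \<le> n" using real_arch_simple by blast
  have "M \<le> env \<phi> n x"
  proof (rule env_greatest)
    fix y assume y: "\<phi> y \<noteq> \<infinity>"
    show "M \<le> real_of_ereal (\<phi> y) + real n * dist x y"
    proof (cases "dist y x < r")
      case True
      have "ereal M < \<phi> y" using r(2)[OF True] .
      then have "M < real_of_ereal (\<phi> y)" by (subst (asm) D_real[OF y]) simp
      then show ?thesis by (simp add: add_increasing2 order_less_imp_le)
    next
      case False
      have "M - c \<le> n * r" using n r(1) by (simp add: pos_divide_le_eq)
      also have "\<dots> \<le> n * dist x y" using False by (intro mult_left_mono) (auto simp: dist_commute)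
      finally show ?thesis using D_ge[OF y] by simp
    qed
  qed
  then show ?thesis by blast
qed

end


context
  fixes \<phi> :: "'a::real_normed_vector \<Rightarrow> ereal" and c :: real
  assumes pr: "proper_fun \<phi>" and lb: "\<And>x. ereal c \<le> \<phi> x" and cv: "ereal_convex \<phi>"
begin

lemma g_convex:
  assumes t: "0 < t" "t < 1" and y1: "\<phi> y1 \<noteq> \<infinity>" and y2: "\<phi> y2 \<noteq> \<infinity>"
  shows "\<phi> (t *\<^sub>R y1 + (1 - t) *\<^sub>R y2) \<noteq> \<infinity> \<and>
     real_of_ereal (\<phi> (t *\<^sub>R y1 + (1 - t) *\<^sub>R y2)) \<le> t * real_of_ereal (\<phi> y1) + (1 - t) * real_of_ereal (\<phi> y2)"
proof -
  let ?y = "t *\<^sub>R y1 + (1 - t) *\<^sub>R y2"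
  have "\<phi> ?y \<le> ereal t * \<phi> y1 + ereal (1 - t) * \<phi> y2" using cv t unfolding ereal_convex_def by blast
  also have "\<dots> = ereal (t * real_of_ereal (\<phi> y1) + (1 - t) * real_of_ereal (\<phi> y2))"
    by (subst D_real[OF pr lb y1], subst D_real[OF pr lb y2]) simp
  finally have le: "\<phi> ?y \<le> ereal (t * real_of_ereal (\<phi> y1) + (1 - t) * real_of_ereal (\<phi> y2))" .
  then have fin: "\<phi> ?y \<noteq> \<infinity>" by auto
  show ?thesis using fin le by (subst (asm) D_real[OF pr lb fin]) simp
qed

lemma env_convex_pt:
  assumes t: "0 < t" "t < 1" and n: "0 \<le> n"
  shows "env \<phi> n (t *\<^sub>R x1 + (1 - t) *\<^sub>R x2) \<le> t * env \<phi> n x1 + (1 - t) * env \<phi> n x2"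
proof (rule field_le_epsilon)
  fix e :: real assume e: "0 < e"
  let ?g = "\<lambda>y. real_of_ereal (\<phi> y)"
  have "Inf ((\<lambda>y. ?g y + n * dist x1 y) ` {y. \<phi> y \<noteq> \<infinity>}) < env \<phi> n x1 + e"
    using e unfolding env_def by simp
  then obtain y1 where y1: "\<phi> y1 \<noteq> \<infinity>" "?g y1 + n * dist x1 y1 < env \<phi> n x1 + e"
    using cInf_lessD[of "(\<lambda>y. ?g y + n * dist x1 y) ` {y. \<phi> y \<noteq> \<infinity>}"] D_ne[OF pr lb] by blast
  have "Inf ((\<lambda>y. ?g y + n * dist x2 y) ` {y. \<phi> y \<noteq> \<infinity>}) < env \<phi> n x2 + e"
    using e unfolding env_def by simp
  then obtain y2 where y2: "\<phi> y2 \<noteq> \<infinity>" "?g y2 + n * dist x2 y2 < env \<phi> n x2 + e"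
    using cInf_lessD[of "(\<lambda>y. ?g y + n * dist x2 y) ` {y. \<phi> y \<noteq> \<infinity>}"] D_ne[OF pr lb] by blast
  let ?y = "t *\<^sub>R y1 + (1 - t) *\<^sub>R y2"
  let ?z = "t *\<^sub>R x1 + (1 - t) *\<^sub>R x2"
  have gy: "\<phi> ?y \<noteq> \<infinity>" "?g ?y \<le> t * ?g y1 + (1 - t) * ?g y2" using g_convex[OF t y1(1) y2(1)] by auto
  have "dist ?z ?y = norm (t *\<^sub>R (x1 - y1) + (1 - t) *\<^sub>R (x2 - y2))"
    by (simp add: dist_norm algebra_simps)
  also have "\<dots> \<le> t * dist x1 y1 + (1 - t) * dist x2 y2"
    using t by (metis (no_types, lifting) abs_of_pos diff_gt_0_iff_gt dist_norm norm_scaleR norm_triangle_ineq)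
  finally have d: "dist ?z ?y \<le> t * dist x1 y1 + (1 - t) * dist x2 y2" .
  have "env \<phi> n ?z \<le> ?g ?y + n * dist ?z ?y" by (rule env_lower[OF pr lb n gy(1)])
  also have "\<dots> \<le> t * ?g y1 + (1 - t) * ?g y2 + n * (t * dist x1 y1 + (1 - t) * dist x2 y2)"
    using gy(2) d n by (intro add_mono mult_left_mono) auto
  also have "\<dots> = t * (?g y1 + n * dist x1 y1) + (1 - t) * (?g y2 + n * dist x2 y2)"
    by (simp add: algebra_simps)
  also have "\<dots> \<le> t * (env \<phi> n x1 + e) + (1 - t) * (env \<phi> n x2 + e)"
    using y1(2) y2(2) t by (intro add_mono[OF mult_left_mono mult_left_mono]) auto
  also have "\<dots> = t * env \<phi> n x1 + (1 - t) * env \<phi> n x2 + e" by (simp add: algebra_simps)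
  finally show "env \<phi> n ?z \<le> t * env \<phi> n x1 + (1 - t) * env \<phi> n x2 + e" .
qed

lemma env_convex: "0 \<le> n \<Longrightarrow> convex_on UNIV (env \<phi> n)"
proof (rule convex_onI)
  fix t x y assume "0 \<le> n" "0 < (t::real)" "t < 1"
  then show "env \<phi> n ((1 - t) *\<^sub>R x + t *\<^sub>R y) \<le> (1 - t) * env \<phi> n x + t * env \<phi> n y"
    using env_convex_pt[of "1 - t" n x y] by simp
qed simp

end


lemma P1_meas:
  assumes "P1 M" "f \<in> borel_measurable borel"
  shows "f \<in> borel_measurable M"
proof -
  have "sets M = sets borel" using assms(1) unfolding P1_def by simp
  then show ?thesis using assms(2) measurable_cong_sets[of M borel borel borel] by simp
qed

lemma lip_integrable:
  fixes f :: "'a::euclidean_space \<Rightarrow> real"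
  assumes "P1 M" "L-lipschitz_on UNIV f"
  shows "integrable M f"
proof -
  have cont: "continuous_on UNIV f" using assms(2) by (rule lipschitz_on_continuous_on)
  have meas: "f \<in> borel_measurable M" using P1_meas[OF assms(1) borel_measurable_continuous_onI[OF cont]] .
  have L: "0 \<le> L" using assms(2) lipschitz_on_nonneg by blast
  have ps: "prob_space M" using assms(1) unfolding P1_def by simp
  have int1: "integrable M (\<lambda>x. norm x)" using assms(1) unfolding P1_def by simp
  have int2: "integrable M (\<lambda>x. \<bar>f 0\<bar> + L * norm x)"
    by (intro Bochner_Integration.integrable_add finite_measure.integrable_const[OF prob_space.finite_measure[OF ps]] integrable_mult_right int1)
  show ?thesis
  proof (rule Bochner_Integration.integrable_bound[OF int2 meas], rule AE_I2)
    fix x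
    have "dist (f x) (f 0) \<le> L * dist x 0" using lipschitz_onD[OF assms(2)] by blast
    then have "\<bar>f x\<bar> \<le> \<bar>f 0\<bar> + L * norm x" by (simp add: dist_real_def)
    moreover have "0 \<le> \<bar>f 0\<bar> + L * norm x" using L by simp
    ultimately show "norm (f x) \<le> norm (\<bar>f 0\<bar> + L * norm x)" by simp
  qed
qed

lemma shift_pt:
  assumes a: "0 \<le> a" and lb: "ereal (-a) \<le> f"
  shows "e2ennreal (f + ereal a) + e2ennreal (- f) = e2ennreal f + ennreal a"
proof (cases f)
  case (real r)
  have r: "-a \<le> r" using lb real by simp
  have e1: "e2ennreal (f + ereal a) = ennreal (r + a)" "e2ennreal (- f) = ennreal (- r)" "e2ennreal f = ennreal r"
    using real by simp_all
  show ?thesis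
  proof (cases "0 \<le> r")
    case True
    have "ennreal (- r) = 0" using True by (intro ennreal_neg) simp
    then show ?thesis unfolding e1 using True a by (simp add: ennreal_plus)
  next
    case False
    have "ennreal (r + a) + ennreal (- r) = ennreal (r + a + - r)"
      using r False by (intro ennreal_plus[symmetric]) auto
    moreover have "ennreal r = 0" using False by (intro ennreal_neg) simp
    ultimately show ?thesis unfolding e1 by simp
  qed
next
  case PInf
  then show ?thesis by simp
next
  case MInf
  then show ?thesis using lb by simp
qed

lemma ext_shift:
  assumes ps: "prob_space M" and f: "f \<in> borel_measurable M" and a: "0 \<le> a"
    and lb: "\<And>x. ereal (-a) \<le> f x"
  shows "ext_integral M f = enn2ereal (\<integral>\<^sup>+x. e2ennreal (f x + ereal a) \<partial>M) - ereal a"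
proof -
  let ?X = "\<integral>\<^sup>+x. e2ennreal (f x + ereal a) \<partial>M"
  let ?P = "\<integral>\<^sup>+x. e2ennreal (f x) \<partial>M"
  let ?N = "\<integral>\<^sup>+x. e2ennreal (- f x) \<partial>M"
  have em: "emeasure M (space M) = 1" using ps by (simp add: prob_space.emeasure_space_1)
  have "?X + ?N = (\<integral>\<^sup>+x. e2ennreal (f x + ereal a) + e2ennreal (- f x) \<partial>M)"
    using f by (intro nn_integral_add[symmetric]) auto
  also have "\<dots> = (\<integral>\<^sup>+x. e2ennreal (f x) + ennreal a \<partial>M)"
    using shift_pt[OF a lb] by simp
  also have "\<dots> = ?P + ennreal a"
    using f em by (subst nn_integral_add) auto
  finally have eq: "?X + ?N = ?P + ennreal a" .
  have "?N \<le> (\<integral>\<^sup>+x. ennreal a \<partial>M)"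
  proof (rule nn_integral_mono)
    fix x show "e2ennreal (- f x) \<le> ennreal a"
    proof -
      have "- f x \<le> - ereal (-a)" using lb[of x] by (simp only: ereal_minus_le_minus)
      then have "- f x \<le> ereal a" by simp
      then show ?thesis using e2ennreal_mono by fastforce
    qed
  qed
  then have Nle: "?N \<le> ennreal a" using em by simp
  then have "enn2ereal ?N \<le> ereal a" using a by (simp add: less_eq_ennreal.rep_eq)
  then have Nfin: "enn2ereal ?N \<noteq> \<infinity>" "enn2ereal ?N \<ge> 0" by auto
  have eq2: "enn2ereal ?X + enn2ereal ?N = enn2ereal ?P + ereal a"
    using arg_cong[OF eq, of enn2ereal] a by (simp add: plus_ennreal.rep_eq)
  have "ext_integral M f = enn2ereal ?P - enn2ereal ?N" unfolding ext_integral_def ..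
  also have "\<dots> = enn2ereal ?X - ereal a"
    using eq2 Nfin by (cases "enn2ereal ?X"; cases "enn2ereal ?P"; cases "enn2ereal ?N") auto
  finally show ?thesis .
qed



lemma lscI: "(\<And>x M. M < f x \<Longrightarrow> eventually (\<lambda>y. M < f y) (at x)) \<Longrightarrow> lsc f"
  unfolding lsc_def by (simp add: le_Liminf_iff)

lemma lsc_cont:
  fixes g :: "'a::topological_space \<Rightarrow> real"
  assumes "continuous_on UNIV g"
  shows "lsc (\<lambda>x. ereal (g x))"
proof (rule lscI)
  fix x M assume "M < ereal (g x)"
  have "((\<lambda>y. ereal (g y)) \<longlongrightarrow> ereal (g x)) (at x)"
    using assms by (intro tendsto_ereal) (simp add: continuous_on_def)
  then show "eventually (\<lambda>y. M < ereal (g y)) (at x)"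
    using \<open>M < ereal (g x)\<close> by (rule order_tendstoD)
qed

lemma lsc_max:
  fixes \<phi> :: "'a::metric_space \<Rightarrow> ereal"
  assumes "lsc \<phi>"
  shows "lsc (\<lambda>x. max (\<phi> x) k)"
proof (rule lscI)
  fix x M assume M: "M < max (\<phi> x) k"
  show "eventually (\<lambda>y. M < max (\<phi> y) k) (at x)"
  proof (cases "M < \<phi> x")
    case True
    have "M < Liminf (at x) \<phi>" using assms True unfolding lsc_def by (meson less_le_trans)
    then have "eventually (\<lambda>y. \<phi> y > M) (at x)" by (rule less_LiminfD)
    then show ?thesis by (rule eventually_mono) (simp add: less_max_iff_disj)
  next
    case False
    then have "M < k" using M by (simp add: less_max_iff_disj)
    then show ?thesis by (simp add: less_max_iff_disj)
  qed
qed

lemma ereal_convex_max: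
  assumes "ereal_convex \<phi>"
  shows "ereal_convex (\<lambda>x. max (\<phi> x) (ereal k))"
  unfolding ereal_convex_def
proof (intro allI impI)
  fix x y and t :: real assume t: "0 < t \<and> t < 1"
  let ?m = "\<lambda>x. max (\<phi> x) (ereal k)"
  have "\<phi> (t *\<^sub>R x + (1 - t) *\<^sub>R y) \<le> ereal t * \<phi> x + ereal (1 - t) * \<phi> y"
    using assms t unfolding ereal_convex_def by blast
  also have "\<dots> \<le> ereal t * ?m x + ereal (1 - t) * ?m y"
    using t by (intro add_mono ereal_mult_left_mono) auto
  finally have 1: "\<phi> (t *\<^sub>R x + (1 - t) *\<^sub>R y) \<le> ereal t * ?m x + ereal (1 - t) * ?m y" .
  have "ereal k = ereal t * ereal k + ereal (1 - t) * ereal k" by (simp add: algebra_simps)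
  also have "\<dots> \<le> ereal t * ?m x + ereal (1 - t) * ?m y"
    using t by (intro add_mono ereal_mult_left_mono) auto
  finally show "?m (t *\<^sub>R x + (1 - t) *\<^sub>R y) \<le> ereal t * ?m x + ereal (1 - t) * ?m y"
    using 1 by simp
qed

lemma ext_real:
  assumes "P1 M" "integrable M g" "0 \<le> a" "\<And>x. -a \<le> g x"
  shows "ext_integral M (\<lambda>x. ereal (g x)) = ereal (integral\<^sup>L M g)"
proof -
  have ps: "prob_space M" using assms(1) unfolding P1_def by simp
  have meas: "g \<in> borel_measurable M" using assms(2) by auto
  have "ext_integral M (\<lambda>x. ereal (g x)) = enn2ereal (\<integral>\<^sup>+x. e2ennreal (ereal (g x) + ereal a) \<partial>M) - ereal a"
    using ps meas assms(3,4) by (intro ext_shift) auto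
  also have "(\<integral>\<^sup>+x. e2ennreal (ereal (g x) + ereal a) \<partial>M) = (\<integral>\<^sup>+x. ennreal (g x + a) \<partial>M)" by simp
  also have "\<dots> = ennreal (integral\<^sup>L M (\<lambda>x. g x + a))"
    using assms(2,4) finite_measure.integrable_const[OF prob_space.finite_measure[OF ps]]
  proof (intro nn_integral_eq_integral AE_I2)
    show "integrable M (\<lambda>x. g x + a)"
      by (intro Bochner_Integration.integrable_add assms(2) finite_measure.integrable_const[OF prob_space.finite_measure[OF ps]])
    fix x show "0 \<le> g x + a" using assms(4)[of x] by linarith
  qed
  also have "integral\<^sup>L M (\<lambda>x. g x + a) = integral\<^sup>L M g + a"
  proof -
    have ic: "integrable M (\<lambda>x. a)" by (rule finite_measure.integrable_const[OF prob_space.finite_measure[OF ps]])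
    have "integral\<^sup>L M (\<lambda>x. g x + a) = integral\<^sup>L M g + integral\<^sup>L M (\<lambda>x. a)"
      by (rule Bochner_Integration.integral_add[OF assms(2) ic])
    then show ?thesis using ps by (simp add: prob_space.prob_space)
  qed
  also have "0 \<le> integral\<^sup>L M g + a"
  proof -
    have "integral\<^sup>L M (\<lambda>x. - a) \<le> integral\<^sup>L M g"
      using assms(2,4) finite_measure.integrable_const[OF prob_space.finite_measure[OF ps]]
      by (intro integral_mono) auto
    then show ?thesis using ps by (simp add: prob_space.prob_space)
  qed
  then have "enn2ereal (ennreal (integral\<^sup>L M g + a)) = ereal (integral\<^sup>L M g + a)" by simp
  finally show ?thesis by simp
qed



lemma dir23:
  fixes \<mu> \<nu> :: "'a::euclidean_space measure" and \<phi> :: "'a \<Rightarrow> real"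
  assumes P: "P1 \<mu>" "P1 \<nu>"
  and H2: "\<forall>\<phi>::'a \<Rightarrow> ereal. lsc \<phi> \<and> proper_fun \<phi> \<and> ereal_convex \<phi>
              \<and> (\<exists>c::real. \<forall>x. ereal c \<le> \<phi> x)
              \<longrightarrow> ext_integral \<mu> \<phi> \<le> ext_integral \<nu> \<phi>"
  and lip: "L-lipschitz_on UNIV \<phi>" and cvx: "convex_on UNIV \<phi>"
  shows "(\<integral>x. \<phi> x \<partial>\<mu>) \<le> (\<integral>x. \<phi> x \<partial>\<nu>)"
proof -
  define \<psi> where "\<psi> n x = max (\<phi> x) (- real n)" for n :: nat and x
  have cont: "continuous_on UNIV \<phi>" using lip by (rule lipschitz_on_continuous_on)
  have contn: "continuous_on UNIV (\<psi> n)" for n unfolding \<psi>_def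
    by (intro continuous_on_max cont continuous_on_const)
  have intp: "integrable \<mu> \<phi>" "integrable \<nu> \<phi>" using lip_integrable[OF _ lip] P by auto
  have measn: "\<psi> n \<in> borel_measurable borel" for n using contn by (rule borel_measurable_continuous_onI)
  have bnd: "norm (\<psi> n x) \<le> norm (\<phi> x)" for n x unfolding \<psi>_def by auto
  have intn: "integrable M (\<psi> n)" if "P1 M" "integrable M \<phi>" for M n
    using that P1_meas[OF that(1) measn] bnd
    by (intro Bochner_Integration.integrable_bound[OF that(2)]) auto
  have ineq: "(\<integral>x. \<psi> n x \<partial>\<mu>) \<le> (\<integral>x. \<psi> n x \<partial>\<nu>)" for n
  proof -
    let ?F = "\<lambda>x. ereal (\<psi> n x)"
    have lsc: "lsc ?F" using contn by (rule lsc_cont)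
    have pr: "proper_fun ?F" unfolding proper_fun_def by auto
    have cv: "ereal_convex ?F"
      unfolding ereal_convex_def
    proof (intro allI impI)
      fix x y and t :: real assume t: "0 < t \<and> t < 1"
      have "\<phi> ((1 - t) *\<^sub>R y + t *\<^sub>R x) \<le> (1 - t) * \<phi> y + t * \<phi> x"
        using cvx t by (intro convex_onD[OF cvx]) auto
      then have c1: "\<phi> (t *\<^sub>R x + (1 - t) *\<^sub>R y) \<le> t * \<psi> n x + (1 - t) * \<psi> n y"
        unfolding \<psi>_def using t
        by (smt (verit, ccfv_SIG) add.commute max.cobounded1 mult_left_mono)
      have a1: "t * (- real n) \<le> t * \<psi> n x" unfolding \<psi>_def using t by (intro mult_left_mono) auto
      have a2: "(1 - t) * (- real n) \<le> (1 - t) * \<psi> n y" unfolding \<psi>_def using t by (intro mult_left_mono) auto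
      have "- real n = t * (- real n) + (1 - t) * (- real n)" by (simp add: algebra_simps)
      then have "- real n \<le> t * \<psi> n x + (1 - t) * \<psi> n y" using a1 a2 by linarith
      with c1 have "\<psi> n (t *\<^sub>R x + (1 - t) *\<^sub>R y) \<le> t * \<psi> n x + (1 - t) * \<psi> n y"
        unfolding \<psi>_def by simp
      then show "?F (t *\<^sub>R x + (1 - t) *\<^sub>R y) \<le> ereal t * ?F x + ereal (1 - t) * ?F y" by simp
    qed
    have lb: "\<exists>c::real. \<forall>x. ereal c \<le> ?F x" by (rule exI[of _ "- real n"]) (simp add: \<psi>_def)
    have "ext_integral \<mu> ?F \<le> ext_integral \<nu> ?F" using H2 lsc pr cv lb by blast
    moreover have "ext_integral M ?F = ereal (\<integral>x. \<psi> n x \<partial>M)" if "P1 M" "integrable M \<phi>" for M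
      using that by (intro ext_real[where a = "real n"] intn) (auto simp: \<psi>_def)
    ultimately show ?thesis using P intp by simp
  qed
  have lim: "(\<lambda>n. \<integral>x. \<psi> n x \<partial>M) \<longlonglongrightarrow> (\<integral>x. \<phi> x \<partial>M)" if "P1 M" "integrable M \<phi>" for M
  proof (rule integral_dominated_convergence[where w = "\<lambda>x. norm (\<phi> x)"])
    show "\<phi> \<in> borel_measurable M" using that(2) by auto
    show "\<psi> n \<in> borel_measurable M" for n using P1_meas[OF that(1) measn] .
    show "integrable M (\<lambda>x. norm (\<phi> x))" using that(2) by auto
    show "AE x in M. norm (\<psi> n x) \<le> norm (\<phi> x)" for n using bnd by auto
    show "AE x in M. (\<lambda>n. \<psi> n x) \<longlonglongrightarrow> \<phi> x"
    proof (rule AE_I2, rule tendsto_eventually)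
      fix x
      obtain N :: nat where "- \<phi> x \<le> N" using real_arch_simple by blast
      then show "eventually (\<lambda>n. \<psi> n x = \<phi> x) sequentially"
        unfolding eventually_sequentially \<psi>_def by (intro exI[of _ N]) auto
    qed
  qed
  show ?thesis using lim[OF P(1) intp(1)] lim[OF P(2) intp(2)] ineq by (intro LIMSEQ_le) auto
qed



lemma sup_env:
  fixes \<phi> :: "'a::real_normed_vector \<Rightarrow> ereal"
  assumes pr: "proper_fun \<phi>" and lb: "\<And>x. ereal (-a) \<le> \<phi> x" and ls: "lsc \<phi>"
  shows "(SUP i. ennreal (env \<phi> (real i) x + a)) = e2ennreal (\<phi> x + ereal a)"
proof (rule antisym)
  show "(SUP i. ennreal (env \<phi> (real i) x + a)) \<le> e2ennreal (\<phi> x + ereal a)"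
  proof (rule SUP_least)
    fix i :: nat
    have "ereal (env \<phi> (real i) x) \<le> \<phi> x" by (rule env_le[OF pr lb]) simp
    then have "ereal (env \<phi> (real i) x) + ereal a \<le> \<phi> x + ereal a" by (rule add_right_mono)
    then have "e2ennreal (ereal (env \<phi> (real i) x + a)) \<le> e2ennreal (\<phi> x + ereal a)"
      by (intro e2ennreal_mono) simp
    then show "ennreal (env \<phi> (real i) x + a) \<le> e2ennreal (\<phi> x + ereal a)" by simp
  qed
next
  show "e2ennreal (\<phi> x + ereal a) \<le> (SUP i. ennreal (env \<phi> (real i) x + a))"
  proof (rule dense_le)
    fix y assume y: "y < e2ennreal (\<phi> x + ereal a)"
    then have "y < top" using top.not_eq_extremum by fastforce
    then obtain r where r: "0 \<le> r" "y = ennreal r" using less_top_ennreal by blast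
    have nn: "0 \<le> \<phi> x + ereal a"
    proof -
      have "ereal (-a) + ereal a \<le> \<phi> x + ereal a" using lb[of x] by (rule add_right_mono)
      then show ?thesis by (simp add: zero_ereal_def)
    qed
    have "enn2ereal y < enn2ereal (e2ennreal (\<phi> x + ereal a))" using y by (simp add: less_ennreal.rep_eq)
    then have "ereal r < \<phi> x + ereal a" using r nn by (simp add: enn2ereal_e2ennreal)
    then have "ereal (r - a) < \<phi> x" by (cases "\<phi> x") auto
    then obtain n :: nat where n: "r - a \<le> env \<phi> n x" using env_approx[OF pr lb ls] by blast
    have "y \<le> ennreal (env \<phi> (real n) x + a)" using n r by (simp add: ennreal_leI)
    also have "\<dots> \<le> (SUP i. ennreal (env \<phi> (real i) x + a))" by (rule SUP_upper) simp
    finally show "y \<le> (SUP i. ennreal (env \<phi> (real i) x + a))" .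
  qed
qed


lemma dir32:
  fixes \<mu> \<nu> :: "'a::euclidean_space measure" and \<phi> :: "'a \<Rightarrow> ereal"
  assumes P: "P1 \<mu>" "P1 \<nu>"
  and H3: "\<forall>\<phi>::'a \<Rightarrow> real. (\<exists>L. L-lipschitz_on UNIV \<phi>) \<and> convex_on UNIV \<phi>
              \<longrightarrow> (\<integral>x. \<phi> x \<partial>\<mu>) \<le> (\<integral>x. \<phi> x \<partial>\<nu>)"
  and ls: "lsc \<phi>" and pr: "proper_fun \<phi>" and cv: "ereal_convex \<phi>" and c: "\<forall>x. ereal c \<le> \<phi> x"
  shows "ext_integral \<mu> \<phi> \<le> ext_integral \<nu> \<phi>"
proof -
  define a where "a = \<bar>c\<bar>"
  have a: "0 \<le> a" unfolding a_def by simp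
  have lb: "ereal (-a) \<le> \<phi> x" for x using c[rule_format, of x] unfolding a_def
    by (metis abs_ge_minus_self ereal_less_eq(3) minus_le_iff order_trans)
  define e where "e i = env \<phi> (real i)" for i :: nat
  have elip: "(real i)-lipschitz_on UNIV (e i)" for i unfolding e_def by (rule env_lip[OF pr lb]) simp
  have econv: "convex_on UNIV (e i)" for i unfolding e_def by (rule env_convex[OF pr lb cv]) simp
  have ege: "-a \<le> e i x" for i x unfolding e_def by (rule env_ge[OF pr lb]) simp
  have emeas: "e i \<in> borel_measurable borel" for i
    by (rule borel_measurable_continuous_onI, rule lipschitz_on_continuous_on[OF elip])
  have eint: "integrable M (e i)" if "P1 M" for M i by (rule lip_integrable[OF that elip])
  have phimeas: "\<phi> \<in> borel_measurable M" if "P1 M" for M by (rule P1_meas[OF that lsc_borel[OF ls]])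
  have ineq: "(\<integral>x. e i x \<partial>\<mu>) \<le> (\<integral>x. e i x \<partial>\<nu>)" for i using H3 elip econv by blast
  have nnint: "(\<integral>\<^sup>+x. ennreal (e i x + a) \<partial>M) = ennreal ((\<integral>x. e i x \<partial>M) + a)" if "P1 M" for M i
  proof -
    have ps: "prob_space M" using that unfolding P1_def by simp
    have ic: "integrable M (\<lambda>x. a)" by (rule finite_measure.integrable_const[OF prob_space.finite_measure[OF ps]])
    have "(\<integral>\<^sup>+x. ennreal (e i x + a) \<partial>M) = ennreal (\<integral>x. e i x + a \<partial>M)"
    proof (intro nn_integral_eq_integral AE_I2)
      show "integrable M (\<lambda>x. e i x + a)" by (intro Bochner_Integration.integrable_add eint[OF that] ic)
      fix x show "0 \<le> e i x + a" using ege[of i x] by linarith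
    qed
    also have "(\<integral>x. e i x + a \<partial>M) = (\<integral>x. e i x \<partial>M) + (\<integral>x. a \<partial>M)"
      by (rule Bochner_Integration.integral_add[OF eint[OF that] ic])
    finally show ?thesis using ps by (simp add: prob_space.prob_space)
  qed
  have mc: "(\<integral>\<^sup>+x. e2ennreal (\<phi> x + ereal a) \<partial>M) = (SUP i. \<integral>\<^sup>+x. ennreal (e i x + a) \<partial>M)" if "P1 M" for M
  proof -
    have "(\<integral>\<^sup>+x. e2ennreal (\<phi> x + ereal a) \<partial>M) = (\<integral>\<^sup>+x. (SUP i. ennreal (e i x + a)) \<partial>M)"
      unfolding e_def using sup_env[OF pr lb ls] by simp
    also have "\<dots> = (SUP i. \<integral>\<^sup>+x. ennreal (e i x + a) \<partial>M)"
    proof (rule nn_integral_monotone_convergence_SUP)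
      show "incseq (\<lambda>i x. ennreal (e i x + a))"
        unfolding incseq_def le_fun_def e_def
        by (intro allI impI ennreal_leI add_right_mono env_mono[OF pr lb]) auto
      show "(\<lambda>x. ennreal (e i x + a)) \<in> borel_measurable M" for i
        using P1_meas[OF that emeas[of i]] by measurable
    qed
    finally show ?thesis .
  qed
  have "(\<integral>\<^sup>+x. e2ennreal (\<phi> x + ereal a) \<partial>\<mu>) \<le> (\<integral>\<^sup>+x. e2ennreal (\<phi> x + ereal a) \<partial>\<nu>)"
  proof -
    have "(\<integral>\<^sup>+x. e2ennreal (\<phi> x + ereal a) \<partial>\<mu>) = (SUP i. ennreal ((\<integral>x. e i x \<partial>\<mu>) + a))"
      using mc[OF P(1)] nnint[OF P(1)] by simp
    also have "\<dots> \<le> (SUP i. ennreal ((\<integral>x. e i x \<partial>\<nu>) + a))"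
    proof (rule SUP_mono)
      fix i :: nat
      show "\<exists>m\<in>UNIV. ennreal ((\<integral>x. e i x \<partial>\<mu>) + a) \<le> ennreal ((\<integral>x. e m x \<partial>\<nu>) + a)"
        using ineq[of i] by (intro bexI[of _ i]) (auto intro: ennreal_leI)
    qed
    also have "\<dots> = (\<integral>\<^sup>+x. e2ennreal (\<phi> x + ereal a) \<partial>\<nu>)"
      using mc[OF P(2)] nnint[OF P(2)] by simp
    finally show ?thesis .
  qed
  then have "enn2ereal (\<integral>\<^sup>+x. e2ennreal (\<phi> x + ereal a) \<partial>\<mu>) - ereal a
      \<le> enn2ereal (\<integral>\<^sup>+x. e2ennreal (\<phi> x + ereal a) \<partial>\<nu>) - ereal a"
    by (intro ereal_minus_mono) (auto simp: less_eq_ennreal.rep_eq)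
  moreover have "ext_integral M \<phi> = enn2ereal (\<integral>\<^sup>+x. e2ennreal (\<phi> x + ereal a) \<partial>M) - ereal a" if "P1 M" for M
    using that phimeas[OF that] a lb unfolding P1_def by (intro ext_shift) auto
  ultimately show ?thesis using P by simp
qed



lemma fin_ennreal: "(x::ennreal) < top \<Longrightarrow> \<exists>r\<ge>0. x = ennreal r"
  using less_top_ennreal by blast

lemma final_arith:
  fixes Pm Pn Nm Nn :: ennreal and Nmi Nni :: "nat \<Rightarrow> ennreal"
  assumes Nm: "Nm = (SUP i. Nmi i)" and Nn: "Nn = (SUP i. Nni i)"
    and fm: "\<And>i. Nmi i < top" and fn: "\<And>i. Nni i < top"
    and ineq: "\<And>i. enn2ereal Pm - enn2ereal (Nmi i) \<le> enn2ereal Pn - enn2ereal (Nni i)"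
    and em: "Pm < top \<or> Nm < top" and en: "Pn < top \<or> Nn < top"
  shows "enn2ereal Pm - enn2ereal Nm \<le> enn2ereal Pn - enn2ereal Nn"
proof (cases "Pm < top")
  case False
  then have Pm: "Pm = top" using top.not_eq_extremum by blast
  obtain r where r: "Nmi 0 = ennreal r" "0 \<le> r" using fin_ennreal[OF fm[of 0]] by blast
  obtain s where s: "Nni 0 = ennreal s" "0 \<le> s" using fin_ennreal[OF fn[of 0]] by blast
  have "\<infinity> \<le> enn2ereal Pn - ereal s" using ineq[of 0] Pm r s by simp
  have "Pn = top"
  proof (rule ccontr)
    assume "Pn \<noteq> top"
    then obtain x where "Pn = ennreal x" "0 \<le> x" using fin_ennreal top.not_eq_extremum by blast
    then show False using \<open>\<infinity> \<le> enn2ereal Pn - ereal s\<close> by simp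
  qed
  then have "Nn < top" using en by auto
  then obtain t where "Nn = ennreal t" "0 \<le> t" using fin_ennreal by blast
  then show ?thesis using \<open>Pn = top\<close> by simp
next
  case True
  obtain p where p: "Pm = ennreal p" "0 \<le> p" using fin_ennreal[OF True] by blast
  show ?thesis
  proof (cases "Nm < top")
    case False
    then have "Nm = top" using top.not_eq_extremum by blast
    then show ?thesis using p by simp
  next
    case Nmf: True
    obtain q where q: "Nm = ennreal q" "0 \<le> q" using fin_ennreal[OF Nmf] by blast
    show ?thesis
    proof (cases "Pn < top")
      case False
      then have "Pn = top" using top.not_eq_extremum by blast
      then have "Nn < top" using en by auto
      then obtain t where "Nn = ennreal t" "0 \<le> t" using fin_ennreal by blast
      then show ?thesis using \<open>Pn = top\<close> p q by simp
    next
      case Pnf: True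
      obtain p' where p': "Pn = ennreal p'" "0 \<le> p'" using fin_ennreal[OF Pnf] by blast
      have step: "Pm + Nni i \<le> Pn + Nm" for i
      proof -
        obtain r where r: "Nmi i = ennreal r" "0 \<le> r" using fin_ennreal[OF fm[of i]] by blast
        obtain s where s: "Nni i = ennreal s" "0 \<le> s" using fin_ennreal[OF fn[of i]] by blast
        have "p - r \<le> p' - s" using ineq[of i] p p' r s by simp
        then have "p + s \<le> p' + r" by simp
        moreover have "r \<le> q"
        proof -
          have "Nmi i \<le> Nm" unfolding Nm by (rule SUP_upper) simp
          then show ?thesis using r q by simp
        qed
        ultimately have "p + s \<le> p' + q" by simp
        then have "ennreal (p + s) \<le> ennreal (p' + q)" by (rule ennreal_leI)
        then show ?thesis using p p' q s by (simp add: ennreal_plus)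
      qed
      have "Pm + Nn = (SUP i. Pm + Nni i)" unfolding Nn by (simp add: ennreal_SUP_add_right)
      also have "\<dots> \<le> Pn + Nm" by (rule SUP_least) (rule step)
      finally have le: "Pm + Nn \<le> Pn + Nm" .
      have "Nn < top"
      proof (rule ccontr)
        assume "\<not> Nn < top"
        then have "Nn = top" using top.not_eq_extremum by blast
        have e1: "Pn + Nm = ennreal (p' + q)" using p' q by (simp add: ennreal_plus)
        have e2: "Pm + Nn = top" using \<open>Nn = top\<close> by simp
        have "top \<le> ennreal (p' + q)" using le unfolding e1 e2 .
        then show False using ennreal_less_top[of "p' + q"] by (simp add: top_unique)
      qed
      then obtain t where t: "Nn = ennreal t" "0 \<le> t" using fin_ennreal by blast
      have "Pn + Nm = ennreal (p' + q)" using p' q by (simp add: ennreal_plus)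
      moreover have "Pm + Nn = ennreal (p + t)" using p t by (simp add: ennreal_plus)
      ultimately have "ennreal (p + t) \<le> ennreal (p' + q)" using le by simp
      then have "p + t \<le> p' + q" using ennreal_le_iff[of "p' + q" "p + t"] add_nonneg_nonneg[OF p'(2) q(2)] by blast
      then show ?thesis using p p' q t by simp
    qed
  qed
qed


lemma e2_max_neg: "k \<le> 0 \<Longrightarrow> e2ennreal (max u (ereal k)) = e2ennreal u"
proof (cases "u \<le> ereal k")
  case True
  assume k: "k \<le> 0"
  have e1: "e2ennreal (ereal k) = 0" using k by (simp add: ennreal_neg)
  have "ereal k \<le> 0" using k by (simp add: zero_ereal_def)
  then have "u \<le> 0" using True by (rule order_trans[rotated])
  then have e2: "e2ennreal u = 0" by (rule e2ennreal_neg)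
  have "max u (ereal k) = ereal k" using True by (rule max_absorb2)
  then show ?thesis using e1 e2 by simp
next
  case False
  then have "max u (ereal k) = u" by (simp add: max_def)
  then show ?thesis by simp
qed

lemma sup_neg:
  "(SUP i::nat. e2ennreal (- max u (ereal (- real i)))) = e2ennreal (- u)"
proof (rule antisym)
  show "(SUP i::nat. e2ennreal (- max u (ereal (- real i)))) \<le> e2ennreal (- u)"
    by (intro SUP_least e2ennreal_mono) simp
next
  show "e2ennreal (- u) \<le> (SUP i::nat. e2ennreal (- max u (ereal (- real i))))"
  proof (rule dense_le)
    fix y assume y: "y < e2ennreal (- u)"
    then have "y < top" using top.not_eq_extremum by fastforce
    then obtain r where r: "0 \<le> r" "y = ennreal r" using less_top_ennreal by blast
    have pos: "0 \<le> - u"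
    proof (rule ccontr)
      assume "\<not> 0 \<le> - u"
      then have "e2ennreal (- u) = 0" by (intro e2ennreal_neg) simp
      then show False using y by simp
    qed
    have "enn2ereal y < enn2ereal (e2ennreal (- u))" using y by (simp add: less_ennreal.rep_eq)
    then have ru: "ereal r < - u" using r pos by (simp add: enn2ereal_e2ennreal)
    obtain n :: nat where n: "r \<le> n" using real_arch_simple by blast
    have "ereal r \<le> - max u (ereal (- real n))"
      using ru n by (cases u) (auto simp: max_def)
    then have "e2ennreal (ereal r) \<le> e2ennreal (- max u (ereal (- real n)))" by (rule e2ennreal_mono)
    then have "y \<le> e2ennreal (- max u (ereal (- real n)))" using r by simp
    also have "\<dots> \<le> (SUP i::nat. e2ennreal (- max u (ereal (- real i))))" by (rule SUP_upper) simp
    finally show "y \<le> (SUP i::nat. e2ennreal (- max u (ereal (- real i))))" .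
  qed
qed

lemma dir21:
  fixes \<mu> \<nu> :: "'a::euclidean_space measure" and \<phi> :: "'a \<Rightarrow> ereal"
  assumes P: "P1 \<mu>" "P1 \<nu>"
  and H2: "\<forall>\<phi>::'a \<Rightarrow> ereal. lsc \<phi> \<and> proper_fun \<phi> \<and> ereal_convex \<phi>
              \<and> (\<exists>c::real. \<forall>x. ereal c \<le> \<phi> x)
              \<longrightarrow> ext_integral \<mu> \<phi> \<le> ext_integral \<nu> \<phi>"
  and ls: "lsc \<phi>" and pr: "proper_fun \<phi>" and cv: "ereal_convex \<phi>"
  and ex: "ext_integral_exists \<mu> \<phi>" "ext_integral_exists \<nu> \<phi>"
  shows "ext_integral \<mu> \<phi> \<le> ext_integral \<nu> \<phi>"
proof -
  define \<Phi> where "\<Phi> i x = max (\<phi> x) (ereal (- real i))" for i :: nat and x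
  have phimeas: "\<phi> \<in> borel_measurable M" if "P1 M" for M by (rule P1_meas[OF that lsc_borel[OF ls]])
  have ineq: "ext_integral \<mu> (\<Phi> i) \<le> ext_integral \<nu> (\<Phi> i)" for i
  proof -
    have "lsc (\<Phi> i)" unfolding \<Phi>_def by (rule lsc_max[OF ls])
    moreover have "proper_fun (\<Phi> i)" unfolding proper_fun_def
    proof
      show "\<forall>x. \<Phi> i x \<noteq> - \<infinity>"
      proof
        fix x
        have "ereal (- real i) \<le> \<Phi> i x" unfolding \<Phi>_def by simp
        then show "\<Phi> i x \<noteq> - \<infinity>" by auto
      qed
      obtain x0 where x0: "\<phi> x0 \<noteq> \<infinity>" using pr unfolding proper_fun_def by blast
      have "\<Phi> i x0 \<noteq> \<infinity>" unfolding \<Phi>_def using x0 by (simp add: max_def)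
      then show "\<exists>x. \<Phi> i x \<noteq> \<infinity>" by blast
    qed
    moreover have "ereal_convex (\<Phi> i)" unfolding \<Phi>_def by (rule ereal_convex_max[OF cv])
    moreover have "\<exists>c::real. \<forall>x. ereal c \<le> \<Phi> i x" unfolding \<Phi>_def by (intro exI[of _ "- real i"]) simp
    ultimately show ?thesis using H2 by blast
  qed
  define Pp where "Pp M = (\<integral>\<^sup>+x. e2ennreal (\<phi> x) \<partial>M)" for M :: "'a measure"
  define Nn where "Nn M = (\<integral>\<^sup>+x. e2ennreal (- \<phi> x) \<partial>M)" for M :: "'a measure"
  define Ni where "Ni M i = (\<integral>\<^sup>+x. e2ennreal (- \<Phi> i x) \<partial>M)" for M :: "'a measure" and i
  have extPhi: "ext_integral M (\<Phi> i) = enn2ereal (Pp M) - enn2ereal (Ni M i)" for M i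
  proof -
    have "(\<integral>\<^sup>+x. e2ennreal (\<Phi> i x) \<partial>M) = Pp M"
      unfolding Pp_def \<Phi>_def by (simp add: e2_max_neg)
    then show ?thesis unfolding ext_integral_def Ni_def by simp
  qed
  have fin: "Ni M i < top" if "P1 M" for M i
  proof -
    have ps: "prob_space M" using that unfolding P1_def by simp
    have "Ni M i \<le> (\<integral>\<^sup>+x. ennreal (real i) \<partial>M)" unfolding Ni_def
    proof (rule nn_integral_mono)
      fix x
      have "ereal (- real i) \<le> \<Phi> i x" unfolding \<Phi>_def by simp
      then have "- \<Phi> i x \<le> - ereal (- real i)" by (simp only: ereal_minus_le_minus)
      then have "- \<Phi> i x \<le> ereal (real i)" by simp
      then show "e2ennreal (- \<Phi> i x) \<le> ennreal (real i)" using e2ennreal_mono by fastforce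
    qed
    also have "\<dots> = ennreal (real i)" using ps by (simp add: prob_space.emeasure_space_1)
    finally show ?thesis using ennreal_less_top[of "real i"] by (simp add: le_less_trans)
  qed
  have sup: "Nn M = (SUP i. Ni M i)" if "P1 M" for M
  proof -
    have "Nn M = (\<integral>\<^sup>+x. (SUP i. e2ennreal (- \<Phi> i x)) \<partial>M)"
      unfolding Nn_def \<Phi>_def by (simp add: sup_neg)
    also have "\<dots> = (SUP i. Ni M i)" unfolding Ni_def
    proof (rule nn_integral_monotone_convergence_SUP)
      show "incseq (\<lambda>i x. e2ennreal (- \<Phi> i x))"
        unfolding incseq_def le_fun_def \<Phi>_def
      proof (intro allI impI e2ennreal_mono)
        fix i j :: nat and x assume "i \<le> j"
        then have "max (\<phi> x) (ereal (- real j)) \<le> max (\<phi> x) (ereal (- real i))"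
          by (intro max.mono) auto
        then show "- max (\<phi> x) (ereal (- real i)) \<le> - max (\<phi> x) (ereal (- real j))"
          by (simp only: ereal_minus_le_minus)
      qed
      show "(\<lambda>x. e2ennreal (- \<Phi> i x)) \<in> borel_measurable M" for i
        unfolding \<Phi>_def using phimeas[OF that] by measurable
    qed
    finally show ?thesis .
  qed
  have exM: "Pp M < top \<or> Nn M < top" if "ext_integral_exists M \<phi>" for M
    using that unfolding ext_integral_exists_def Pp_def Nn_def by simp
  have "enn2ereal (Pp \<mu>) - enn2ereal (Nn \<mu>) \<le> enn2ereal (Pp \<nu>) - enn2ereal (Nn \<nu>)"
    by (rule final_arith[OF sup[OF P(1)] sup[OF P(2)] fin[OF P(1)] fin[OF P(2)] _ exM[OF ex(1)] exM[OF ex(2)]])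
       (use ineq extPhi in simp)
  then show ?thesis unfolding ext_integral_def Pp_def Nn_def .
qed

lemma dir12:
  fixes \<mu> \<nu> :: "'a::euclidean_space measure" and \<phi> :: "'a \<Rightarrow> ereal"
  assumes P: "P1 \<mu>" "P1 \<nu>"
  and H1: "\<forall>\<phi>::'a \<Rightarrow> ereal. lsc \<phi> \<and> proper_fun \<phi> \<and> ereal_convex \<phi>
              \<and> ext_integral_exists \<mu> \<phi> \<and> ext_integral_exists \<nu> \<phi>
              \<longrightarrow> ext_integral \<mu> \<phi> \<le> ext_integral \<nu> \<phi>"
  and ls: "lsc \<phi>" and pr: "proper_fun \<phi>" and cv: "ereal_convex \<phi>" and c: "\<forall>x. ereal c \<le> \<phi> x"
  shows "ext_integral \<mu> \<phi> \<le> ext_integral \<nu> \<phi>"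
proof -
  have ex: "ext_integral_exists M \<phi>" if "P1 M" for M
  proof -
    have ps: "prob_space M" using that unfolding P1_def by simp
    have "(\<integral>\<^sup>+x. e2ennreal (- \<phi> x) \<partial>M) \<le> (\<integral>\<^sup>+x. ennreal \<bar>c\<bar> \<partial>M)"
    proof (rule nn_integral_mono)
      fix x
      have "- \<phi> x \<le> - ereal c" using c[rule_format, of x] by (simp only: ereal_minus_le_minus)
      also have "\<dots> \<le> ereal \<bar>c\<bar>" by simp
      finally have "- \<phi> x \<le> ereal \<bar>c\<bar>" .
      then show "e2ennreal (- \<phi> x) \<le> ennreal \<bar>c\<bar>" using e2ennreal_mono by fastforce
    qed
    also have "\<dots> = ennreal \<bar>c\<bar>" using ps by (simp add: prob_space.emeasure_space_1)
    finally have "(\<integral>\<^sup>+x. e2ennreal (- \<phi> x) \<partial>M) < \<infinity>"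
      using ennreal_less_top[of "\<bar>c\<bar>"] by (simp add: le_less_trans)
    then show ?thesis unfolding ext_integral_exists_def by (rule disjI2)
  qed
  show ?thesis by (rule H1[rule_format]) (intro conjI ls pr cv ex P)+
qed


theorem mainTheorem7:
  fixes \<mu> \<nu> :: "'a::euclidean_space measure"
  assumes "P1 \<mu>" and "P1 \<nu>"
  shows "((\<forall>\<phi>::'a \<Rightarrow> ereal. lsc \<phi> \<and> proper_fun \<phi> \<and> ereal_convex \<phi>
              \<and> ext_integral_exists \<mu> \<phi> \<and> ext_integral_exists \<nu> \<phi>
              \<longrightarrow> ext_integral \<mu> \<phi> \<le> ext_integral \<nu> \<phi>)
       \<longleftrightarrow> (\<forall>\<phi>::'a \<Rightarrow> ereal. lsc \<phi> \<and> proper_fun \<phi> \<and> ereal_convex \<phi>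
              \<and> (\<exists>c::real. \<forall>x. ereal c \<le> \<phi> x)
              \<longrightarrow> ext_integral \<mu> \<phi> \<le> ext_integral \<nu> \<phi>))
     \<and> ((\<forall>\<phi>::'a \<Rightarrow> ereal. lsc \<phi> \<and> proper_fun \<phi> \<and> ereal_convex \<phi>
              \<and> (\<exists>c::real. \<forall>x. ereal c \<le> \<phi> x)
              \<longrightarrow> ext_integral \<mu> \<phi> \<le> ext_integral \<nu> \<phi>)
       \<longleftrightarrow> (\<forall>\<phi>::'a \<Rightarrow> real. (\<exists>L. L-lipschitz_on UNIV \<phi>) \<and> convex_on UNIV \<phi>
              \<longrightarrow> (\<integral>x. \<phi> x \<partial>\<mu>) \<le> (\<integral>x. \<phi> x \<partial>\<nu>)))"
  proof -
  let ?H1 = "\<forall>\<phi>::'a \<Rightarrow> ereal. lsc \<phi> \<and> proper_fun \<phi> \<and> ereal_convex \<phi>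
              \<and> ext_integral_exists \<mu> \<phi> \<and> ext_integral_exists \<nu> \<phi>
              \<longrightarrow> ext_integral \<mu> \<phi> \<le> ext_integral \<nu> \<phi>"
  let ?H2 = "\<forall>\<phi>::'a \<Rightarrow> ereal. lsc \<phi> \<and> proper_fun \<phi> \<and> ereal_convex \<phi>
              \<and> (\<exists>c::real. \<forall>x. ereal c \<le> \<phi> x)
              \<longrightarrow> ext_integral \<mu> \<phi> \<le> ext_integral \<nu> \<phi>"
  let ?H3 = "\<forall>\<phi>::'a \<Rightarrow> real. (\<exists>L. L-lipschitz_on UNIV \<phi>) \<and> convex_on UNIV \<phi>
              \<longrightarrow> (\<integral>x. \<phi> x \<partial>\<mu>) \<le> (\<integral>x. \<phi> x \<partial>\<nu>)"
  have a: "?H1 \<longleftrightarrow> ?H2"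
  proof
    assume h: ?H1
    show ?H2
    proof (intro allI impI, elim conjE exE)
      fix \<phi> :: "'a \<Rightarrow> ereal" and c :: real
      assume "lsc \<phi>" "proper_fun \<phi>" "ereal_convex \<phi>" "\<forall>x. ereal c \<le> \<phi> x"
      then show "ext_integral \<mu> \<phi> \<le> ext_integral \<nu> \<phi>" by (rule dir12[OF assms h])
    qed
  next
    assume h: ?H2
    show ?H1
    proof (intro allI impI, elim conjE)
      fix \<phi> :: "'a \<Rightarrow> ereal"
      assume "lsc \<phi>" "proper_fun \<phi>" "ereal_convex \<phi>" "ext_integral_exists \<mu> \<phi>" "ext_integral_exists \<nu> \<phi>"
      then show "ext_integral \<mu> \<phi> \<le> ext_integral \<nu> \<phi>" by (rule dir21[OF assms h])
    qed
  qed
  have b: "?H2 \<longleftrightarrow> ?H3"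
  proof
    assume h: ?H2
    show ?H3
    proof (intro allI impI, elim conjE exE)
      fix \<phi> :: "'a \<Rightarrow> real" and L
      assume "L-lipschitz_on UNIV \<phi>" "convex_on UNIV \<phi>"
      then show "(\<integral>x. \<phi> x \<partial>\<mu>) \<le> (\<integral>x. \<phi> x \<partial>\<nu>)" by (rule dir23[OF assms h])
    qed
  next
    assume h: ?H3
    show ?H2
    proof (intro allI impI, elim conjE exE)
      fix \<phi> :: "'a \<Rightarrow> ereal" and c :: real
      assume "lsc \<phi>" "proper_fun \<phi>" "ereal_convex \<phi>" "\<forall>x. ereal c \<le> \<phi> x"
      then show "ext_integral \<mu> \<phi> \<le> ext_integral \<nu> \<phi>" by (rule dir32[OF assms h])
    qed
  qed
  show ?thesis using a b by blast
qed

end
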